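(* Fix an integer $C\ge 2$. There exists $\rho_0>0$ (depending only on $C$) such that for every $\rho\ge\rho_0$ and every $h_S\in[0,1]$, with $h_L^\pm$ and $\hat h_F$ as in the context (so $0<h_L^-<h_L^+<1$): - if $h_L=\frac1C$, then $\dfrac{\partial \mathcal{J}_h^{\mathcal{G}}}{\partial h_F}=0$ for all $h_F\in(-1,1)$; - if $h_L\neq \frac1C$, then $\dfrac{\partial \mathcal{J}_h^{\mathcal{G}}}{\partial h_F}$ has the same sign as $\hat h_F-h_F$; in particular it is $<0$ if $h_L\in(0,h_L^-)$, or if $h_L\in(h_L^-,h_L^+)$ and $h_F\in(\hat h_F,1)$; it is $>0$ if $h_L\in(h_L^+,1]$, or if $h_L\in(h_L^-,h_L^+)$ and $h_F\in(-1,\hat h_F)$; and it is $=0$ if $h_L\in(h_L^-,h_L^+)$ and $h_F=\hat h_F$.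
   Context: Setting: $C\ge 2$ is the number of classes, $h_L\in[0,1]$ (label homophily), $h_S\in[0,1]$ (structural homophily), $h_F\in(-1,1)$ (feature homophily), and $\rho>0$ a real parameter (the spectral radius of the adjacency matrix). Define $$p_0=\frac{h_LC-1}{C-1},\qquad p_1=\frac{1-h_L}{C-1},\qquad \omega=\frac{h_F}{\rho},\qquad Q=C\,p_1^2+\frac{C(1-h_S)^2}{C-1}+p_0^2\ (>0),$$ $$\mathcal{J}_h^{\neg\mathcal{G}}=\frac{1-\omega^2 Q}{(1-\omega p_0)^2},\qquad \mathcal{J}_h^{\mathcal{G}}=\frac{p_0^2}{Q}\,\mathcal{J}_h^{\neg\mathcal{G}}.$$ Define $\hat h_F=\rho p_0/Q$ and $$h_L^+=\frac{4C+C(C-1)\rho-\sqrt{[4C+C(C-1)\rho]^2-4C(C+1)\,[\,C+1+(C-1)\rho+C(C-1)(1-h_S)^2\,]}}{2C(C+1)},$$ $$h_L^-=\frac{4C-C(C-1)\rho+\sqrt{[4C-C(C-1)\rho]^2-4C(C+1)\,[\,C+1-(C-1)\rho+C(C-1)(1-h_S)^2\,]}}{2C(C+1)}.$$ Partial derivatives are taken with $C$, $\rho$, $h_L$, $h_S$ held fixed. *)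

theory Defs
  imports "HOL-Analysis.Analysis"
begin

text \<open>Quantities from the paper; C is the number of classes (a natural number, C \<ge> 2),
  rho the spectral radius, hL, hS, hF label / structural / feature homophily.\<close>

definition p0 :: "nat \<Rightarrow> real \<Rightarrow> real" where
  "p0 C hL = (hL * real C - 1) / (real C - 1)"

definition p1 :: "nat \<Rightarrow> real \<Rightarrow> real" where
  "p1 C hL = (1 - hL) / (real C - 1)"

definition omega :: "real \<Rightarrow> real \<Rightarrow> real" where
  "omega rho hF = hF / rho"

definition Qv :: "nat \<Rightarrow> real \<Rightarrow> real \<Rightarrow> real" where
  "Qv C hL hS = real C * (p1 C hL)^2 + real C * (1 - hS)^2 / (real C - 1) + (p0 C hL)^2"

definition J_notG :: "nat \<Rightarrow> real \<Rightarrow> real \<Rightarrow> real \<Rightarrow> real \<Rightarrow> real" where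
  "J_notG C rho hL hS hF =
     (1 - (omega rho hF)^2 * Qv C hL hS) / (1 - omega rho hF * p0 C hL)^2"

definition J_G :: "nat \<Rightarrow> real \<Rightarrow> real \<Rightarrow> real \<Rightarrow> real \<Rightarrow> real" where
  "J_G C rho hL hS hF = (p0 C hL)^2 / Qv C hL hS * J_notG C rho hL hS hF"

definition hF_hat :: "nat \<Rightarrow> real \<Rightarrow> real \<Rightarrow> real \<Rightarrow> real" where
  "hF_hat C rho hL hS = rho * p0 C hL / Qv C hL hS"

definition hL_plus :: "nat \<Rightarrow> real \<Rightarrow> real \<Rightarrow> real" where
  "hL_plus C rho hS =
    (4 * real C + real C * (real C - 1) * rho
      - sqrt ((4 * real C + real C * (real C - 1) * rho)^2
              - 4 * real C * (real C + 1) *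
                (real C + 1 + (real C - 1) * rho + real C * (real C - 1) * (1 - hS)^2)))
    / (2 * real C * (real C + 1))"

definition hL_minus :: "nat \<Rightarrow> real \<Rightarrow> real \<Rightarrow> real" where
  "hL_minus C rho hS =
    (4 * real C - real C * (real C - 1) * rho
      + sqrt ((4 * real C - real C * (real C - 1) * rho)^2
              - 4 * real C * (real C + 1) *
                (real C + 1 - (real C - 1) * rho + real C * (real C - 1) * (1 - hS)^2)))
    / (2 * real C * (real C + 1))"

end

theory Submission imports Defs begin
lemma deriv_J:
  fixes p q r x :: real
  assumes "r > 0" "q > 0" "1 - x/r*p \<noteq> 0"
  shows "((\<lambda>y. p^2/q * ((1 - (y/r)^2*q)/(1 - y/r*p)^2)) has_real_derivative
          (2*p^2*(r*p/q - x)/(r^2*(1-x/r*p)^3))) (at x)"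
proof -
  have w: "r - x*p \<noteq> 0" using assms by (auto simp: field_simps)
  have e: "1 - x/r*p = (r - x*p)/r" using assms by (simp add: field_simps)
  have feq: "(\<lambda>y. p^2/q * ((1 - (y/r)^2*q)/(1 - y/r*p)^2)) = (\<lambda>y. p^2/q * ((r^2 - y^2*q)/(r - y*p)^2))"
  proof
    fix y
    have "(1 - (y/r)^2*q)/(1 - y/r*p)^2 = ((r^2 - y^2*q)/r^2)/((r - y*p)^2/r^2)"
      using assms by (simp add: field_simps power2_eq_square)
    also have "\<dots> = (r^2 - y^2*q)/(r - y*p)^2" using assms by simp
    finally show "p^2/q * ((1 - (y/r)^2*q)/(1 - y/r*p)^2) = p^2/q * ((r^2 - y^2*q)/(r - y*p)^2)" by simp
  qed
  have A: "((\<lambda>y. r^2 - y^2*q) has_real_derivative (-(2*x*q))) (at x)"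
    by (auto intro!: derivative_eq_intros)
  have B: "((\<lambda>y. (r - y*p)^2) has_real_derivative (-(2*p*(r-x*p)))) (at x)"
    by (auto intro!: derivative_eq_intros)
  have nz: "(r - x*p)^2 \<noteq> 0" using w by simp
  note D = DERIV_cmult[OF DERIV_quotient[OF A B nz], of "p^2/q"]
  define u where "u = r - x*p"
  have u0: "u \<noteq> 0" using w u_def by simp
  have num: "(-(2*x*q)) * u^2 - (-(2*p*u)) * (r^2 - x^2*q) = 2*u*r*(p*r - x*q)"
    unfolding u_def by algebra
  have "p^2/q * ((-(2*x*q)) * (r - x*p)^2 - (-(2*p*(r-x*p))) * (r^2 - x^2*q)) / ((r-x*p)^2 ^ Suc (Suc 0))
      = p^2/q * (2*u*r*(p*r - x*q)) / ((u)^2 ^ Suc (Suc 0))"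
    using num unfolding u_def by simp
  also have "\<dots> = 2*p^2*r*(p*r - x*q)/(q*u^3)"
    using u0 assms by (simp add: field_simps power2_eq_square power3_eq_cube)
  also have "\<dots> = 2*p^2*(r*p/q - x)/(r^2*(u/r)^3)"
    using u0 assms by (simp add: field_simps power2_eq_square power3_eq_cube)
  also have "\<dots> = 2*p^2*(r*p/q - x)/(r^2*(1-x/r*p)^3)"
    unfolding e u_def ..
  finally have "p^2/q * ((-(2*x*q)) * (r - x*p)^2 - (-(2*p*(r-x*p))) * (r^2 - x^2*q)) / ((r-x*p)^2 ^ Suc (Suc 0))
      = 2*p^2*(r*p/q - x)/(r^2*(1-x/r*p)^3)" .
  with D feq show ?thesis by simp
qed
lemma quad_root:
  fixes a b c :: real
  assumes "a \<noteq> 0" "b^2 - 4*a*c \<ge> 0"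
  shows "a*((b + sqrt (b^2 - 4*a*c))/(2*a))^2 - b*((b + sqrt (b^2 - 4*a*c))/(2*a)) + c = 0"
    and "a*((b - sqrt (b^2 - 4*a*c))/(2*a))^2 - b*((b - sqrt (b^2 - 4*a*c))/(2*a)) + c = 0"
proof -
  define s where "s = sqrt (b^2 - 4*a*c)"
  have s2: "s^2 = b^2 - 4*a*c" using assms s_def by simp
  have "a*((b + s)/(2*a))^2 - b*((b + s)/(2*a)) + c = (s^2 - (b^2 - 4*a*c))/(4*a)"
    using assms(1) by (simp add: field_simps power2_eq_square)
  then show "a*((b + sqrt (b^2 - 4*a*c))/(2*a))^2 - b*((b + sqrt (b^2 - 4*a*c))/(2*a)) + c = 0"
    using s2 s_def by simp
  have "a*((b - s)/(2*a))^2 - b*((b - s)/(2*a)) + c = (s^2 - (b^2 - 4*a*c))/(4*a)"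
    using assms(1) by (simp add: field_simps power2_eq_square)
  then show "a*((b - sqrt (b^2 - 4*a*c))/(2*a))^2 - b*((b - sqrt (b^2 - 4*a*c))/(2*a)) + c = 0"
    using s2 s_def by simp
qed

lemma quad_conv:
  fixes a b c t u w :: real
  assumes "a \<ge> 0" "0 \<le> t" "t \<le> 1"
  shows "a*((1-t)*u+t*w)^2 - b*((1-t)*u+t*w) + c \<le> (1-t)*(a*u^2 - b*u + c) + t*(a*w^2 - b*w + c)"
proof -
  have "a*((1-t)*u+t*w)^2 - b*((1-t)*u+t*w) + c = (1-t)*(a*u^2 - b*u + c) + t*(a*w^2 - b*w + c) - a*(t*(1-t))*(u-w)^2"
    by algebra
  moreover have "a*(t*(1-t))*(u-w)^2 \<ge> 0" using assms by simp
  ultimately show ?thesis by linarith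
qed

lemma Q_pos:
  assumes "C \<ge> 2"
  shows "Qv C x hS > 0"
proof -
  have c1: "real C - 1 > 0" using assms by simp
  have t: "real C * (1 - hS)^2 / (real C - 1) \<ge> 0" using c1 by simp
  have "real C * (p1 C x)^2 + (p0 C x)^2 > 0"
  proof (cases "p0 C x = 0")
    case True
    then have "x * real C = 1" using c1 unfolding p0_def by simp
    then have "x \<noteq> 1" using assms by auto
    then have "p1 C x \<noteq> 0" using c1 unfolding p1_def by simp
    then show ?thesis using assms by (simp add: add_pos_nonneg)
  next
    case False
    then show ?thesis using assms by (simp add: add_nonneg_pos)
  qed
  then show ?thesis unfolding Qv_def using t by linarith
qed


theorem theorem2p3:
  fixes C :: nat
  assumes "C \<ge> 2"
  shows "\<exists>rho0 > 0. \<forall>rho hS. rho \<ge> rho0 \<and> 0 \<le> hS \<and> hS \<le> 1 \<longrightarrow>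
    (0 < hL_minus C rho hS \<and> hL_minus C rho hS < hL_plus C rho hS \<and> hL_plus C rho hS < 1) \<and>
    (\<forall>hL hF. 0 \<le> hL \<and> hL \<le> 1 \<and> -1 < hF \<and> hF < 1 \<longrightarrow>
      (let J = (\<lambda>x. J_G C rho hL hS x);
           d = deriv J hF;
           hm = hL_minus C rho hS; hp = hL_plus C rho hS;
           hh = hF_hat C rho hL hS
       in J differentiable (at hF) \<and>
          (hL = 1 / real C \<longrightarrow> d = 0) \<and>
          (hL \<noteq> 1 / real C \<longrightarrow>
             sgn d = sgn (hh - hF) \<and>
             ((0 < hL \<and> hL < hm) \<or> (hm < hL \<and> hL < hp \<and> hh < hF) \<longrightarrow> d < 0) \<and>
             ((hp < hL \<and> hL \<le> 1) \<or> (hm < hL \<and> hL < hp \<and> hF < hh) \<longrightarrow> d > 0) \<and>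
             (hm < hL \<and> hL < hp \<and> hF = hh \<longrightarrow> d = 0))))"
proof -
  define c where "c = real C"
  have c2: "c \<ge> 2" using assms c_def by simp
  show ?thesis
  proof (rule exI[of _ "c + 4"], intro conjI allI impI)
    show "c + 4 > 0" using c2 by simp
    fix rho hS :: real
    assume H: "c + 4 \<le> rho \<and> 0 \<le> hS \<and> hS \<le> 1"
    have rho: "rho \<ge> c + 4" using H by simp
    define s where "s = (1-hS)^2"
    have s0: "0 \<le> s" using s_def by simp
    have s1: "s \<le> 1" unfolding s_def using H by (intro power_le_one) auto
    define a where "a = c*(c+1)"
    define bM where "bM = 4*c - c*(c-1)*rho"
    define kM where "kM = c+1 - (c-1)*rho + c*(c-1)* s"
    define bP where "bP = 4*c + c*(c-1)*rho"
    define kP where "kP = c+1 + (c-1)*rho + c*(c-1)* s"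
    define hm where "hm = hL_minus C rho hS"
    define hp where "hp = hL_plus C rho hS"
    have a0: "a > 0" using c2 a_def by simp
    have hm_eq: "hm = (bM + sqrt(bM^2 - 4*a*kM))/(2*a)"
      unfolding hm_def hL_minus_def bM_def kM_def a_def s_def c_def by (simp add: mult.assoc)
    have hp_eq: "hp = (bP - sqrt(bP^2 - 4*a*kP))/(2*a)"
      unfolding hp_def hL_plus_def bP_def kP_def a_def s_def c_def by (simp add: mult.assoc)
    have c1: "c - 1 \<noteq> 0" using c2 by simp
    have qm_id: "(c-1)^2*(Qv C x hS + rho*p0 C x) = a*x^2 - bM*x + kM" for x
    proof -
      have e1: "(c-1)*p0 C x = c*x - 1" unfolding p0_def c_def[symmetric] using c1 by (simp add: field_simps)
      have e2: "(c-1)*p1 C x = 1 - x" unfolding p1_def c_def[symmetric] using c1 by simp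
      have g: "(c-1)^2*(c*P1^2 + c*(1-hS)^2/(c-1) + P0^2 + rho*P0) = c*((c-1)*P1)^2 + c*(c-1)* s + ((c-1)*P0)^2 + rho*(c-1)*((c-1)*P0)" for P0 P1
        unfolding s_def using c1 by (simp add: field_simps power2_eq_square)
      have "(c-1)^2*(Qv C x hS + rho*p0 C x) = c*(1-x)^2 + (c*x-1)^2 + c*(c-1)* s + rho*(c-1)*(c*x-1)"
        unfolding Qv_def c_def[symmetric] g e1 e2 by simp
      also have "\<dots> = a*x^2 - bM*x + kM" unfolding a_def bM_def kM_def by algebra
      finally show ?thesis .
    qed
    have qp_id: "(c-1)^2*(Qv C x hS - rho*p0 C x) = a*x^2 - bP*x + kP" for x
    proof -
      have e1: "(c-1)*p0 C x = c*x - 1" unfolding p0_def c_def[symmetric] using c1 by (simp add: field_simps)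
      have e2: "(c-1)*p1 C x = 1 - x" unfolding p1_def c_def[symmetric] using c1 by simp
      have g: "(c-1)^2*(c*P1^2 + c*(1-hS)^2/(c-1) + P0^2 - rho*P0) = c*((c-1)*P1)^2 + c*(c-1)* s + ((c-1)*P0)^2 - rho*(c-1)*((c-1)*P0)" for P0 P1
        unfolding s_def using c1 by (simp add: field_simps power2_eq_square)
      have "(c-1)^2*(Qv C x hS - rho*p0 C x) = c*(1-x)^2 + (c*x-1)^2 + c*(c-1)* s - rho*(c-1)*(c*x-1)"
        unfolding Qv_def c_def[symmetric] g e1 e2 by simp
      also have "\<dots> = a*x^2 - bP*x + kP" unfolding a_def bP_def kP_def by algebra
      finally show ?thesis .
    qed
    have m1: "(c-1)*rho \<ge> (c-1)*(c+4)" using rho c2 by (intro mult_left_mono) auto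
    have m2: "c*(c-1)* s \<le> c*(c-1)" using s1 c2 by (intro mult_left_le) auto
    have kM0: "kM < 0"
    proof -
      have "(c-1)*(c+4) = c^2 + 3*c - 4" by algebra
      then show ?thesis unfolding kM_def using m1 m2 c2 by (simp add: power2_eq_square algebra_simps)
    qed
    have qp1: "a - bP + kP < 0"
    proof -
      have E: "a - bP + kP = c*c - 2*c + 1 - (c-1)*rho*(c-1) + c*(c-1)* s"
        unfolding a_def bP_def kP_def by algebra
      have F1: "(c-1)*rho*(c-1) \<ge> (c-1)*(c+4)*(c-1)" using m1 c2 by (intro mult_right_mono) auto
      have F2: "(c-1)*(c+4)*(c-1) = c*c*c + 2*(c*c) - 7*c + 4" by algebra
      have F3: "c*(c-1)* s \<le> c*c - c" using m2 by (simp add: algebra_simps)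
      have F4: "c*c*c \<ge> 2*(c*c)" using c2 mult_right_mono[of 2 c "c*c"] by simp
      have F5: "c*c \<ge> 2*c" using c2 by (intro mult_right_mono) auto
      show ?thesis using E F1 F2 F3 F4 F5 by linarith
    qed
    define Dm where "Dm = bM^2 - 4*a*kM"
    define Dp where "Dp = bP^2 - 4*a*kP"
    have Dm: "Dm > bM^2" unfolding Dm_def using a0 kM0 by (simp add: mult_pos_neg)
    have Dp_id: "4*a*(a - bP + kP) = (2*a - bP)^2 - Dp" unfolding Dp_def by algebra
    have "4*a*(a - bP + kP) < 0" using a0 qp1 by (simp add: mult_pos_neg)
    then have Dp: "Dp > (2*a - bP)^2" using Dp_id by linarith
    have "Dm \<ge> 0" using Dm by (smt (verit) zero_le_power2)
    then have rm: "a*hm^2 - bM*hm + kM = 0" unfolding hm_eq using quad_root(1)[of a bM kM] a0 Dm_def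
      by simp
    have "Dp \<ge> 0" using Dp by (smt (verit) zero_le_power2)
    then have rp: "a*hp^2 - bP*hp + kP = 0" unfolding hp_eq using quad_root(2)[of a bP kP] a0 Dp_def
      by simp
    have sqm: "sqrt Dm > \<bar>bM\<bar>" using Dm real_sqrt_less_mono[of "bM^2" Dm] by simp
    have sqp: "sqrt Dp > \<bar>2*a - bP\<bar>" using Dp real_sqrt_less_mono[of "(2*a-bP)^2" Dp] by simp
    have hm0: "hm > 0" unfolding hm_eq Dm_def[symmetric] using sqm a0 by (simp add: divide_pos_pos)
    have hp1: "hp < 1" unfolding hp_eq Dp_def[symmetric] using sqp a0 by (simp add: divide_simps)
    have Qp: "Qv C x hS > 0" for x using Q_pos assms by blast
    have cpos: "(c-1)^2 > 0" using c1 by simp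
    have p0neg: "p0 C x < 0 \<longleftrightarrow> x < 1/c" for x
    proof -
      have "p0 C x < 0 \<longleftrightarrow> x*c - 1 < 0" unfolding p0_def c_def[symmetric] using c2
        by (simp add: divide_less_0_iff)
      also have "\<dots> \<longleftrightarrow> x < 1/c" using c2 by (simp add: field_simps)
      finally show ?thesis .
    qed
    have p0pos: "p0 C x > 0 \<longleftrightarrow> x > 1/c" for x
    proof -
      have "p0 C x > 0 \<longleftrightarrow> x*c - 1 > 0" unfolding p0_def c_def[symmetric] using c2
        by (simp add: zero_less_divide_iff)
      also have "\<dots> \<longleftrightarrow> x > 1/c" using c2 by (simp add: field_simps)
      finally show ?thesis .
    qed
    have "Qv C hm hS + rho*p0 C hm = 0" using qm_id[of hm] rm cpos by simp
    then have "rho*p0 C hm < 0" using Qp[of hm] by linarith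
    then have "p0 C hm < 0" using rho c2 by (simp add: mult_less_0_iff)
    then have hmc: "hm < 1/c" using p0neg by blast
    have "Qv C hp hS - rho*p0 C hp = 0" using qp_id[of hp] rp cpos by simp
    then have "rho*p0 C hp > 0" using Qp[of hp] by linarith
    then have "p0 C hp > 0" using rho c2 by (simp add: zero_less_mult_iff)
    then have hpc: "hp > 1/c" using p0pos by blast
    show "0 < hL_minus C rho hS" using hm0 unfolding hm_def .
    show "hL_minus C rho hS < hL_plus C rho hS" using hmc hpc unfolding hm_def hp_def by linarith
    show "hL_plus C rho hS < 1" using hp1 unfolding hp_def .
    fix hL hF :: real
    assume R: "0 \<le> hL \<and> hL \<le> 1 \<and> -1 < hF \<and> hF < 1"
    define p where "p = p0 C hL"
    define q where "q = Qv C hL hS"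
    define hh where "hh = hF_hat C rho hL hS"
    have q0: "q > 0" using Qp q_def by simp
    have rho1: "rho \<ge> 1" using rho c2 by simp
    have pl: "p \<le> 1" "p \<ge> -1"
    proof -
      have "hL * c \<le> c" using R c2 mult_left_le_one_le[of c hL] by (simp add: mult.commute)
      then have "hL * c - 1 \<le> c - 1" by simp
      then show "p \<le> 1" unfolding p_def p0_def c_def[symmetric] using c2 by (simp add: divide_simps)
      have "hL * c \<ge> 0" using R c2 by simp
      then have "hL * c - 1 \<ge> -(c - 1)" using c2 by simp
      then show "p \<ge> -1" unfolding p_def p0_def c_def[symmetric] using c2 by (simp add: divide_simps)
    qed
    have "\<bar>hF*p\<bar> < rho"
    proof -
      have "\<bar>hF*p\<bar> = \<bar>hF\<bar>*\<bar>p\<bar>" by (simp add: abs_mult)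
      also have "\<dots> \<le> \<bar>hF\<bar>" using pl by (simp add: mult_left_le)
      finally show ?thesis using R rho1 by linarith
    qed
    then have nzp: "1 - hF/rho*p > 0" using rho1 by (simp add: field_simps abs_less_iff)
    have D: "((\<lambda>x. J_G C rho hL hS x) has_real_derivative (2*p^2*(rho*p/q - hF)/(rho^2*(1-hF/rho*p)^3))) (at hF)"
      using deriv_J[of rho q hF p] rho1 q0 nzp
      unfolding J_G_def J_notG_def omega_def p_def q_def by simp
    have dd: "deriv (\<lambda>x. J_G C rho hL hS x) hF = 2*p^2*(rho*p/q - hF)/(rho^2*(1-hF/rho*p)^3)"
      using D by (rule DERIV_imp_deriv)
    have hh_eq: "hh = rho*p/q" unfolding hh_def hF_hat_def p_def q_def ..
    define K where "K = 2*p^2/(rho^2*(1-hF/rho*p)^3)"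
    have dK: "deriv (\<lambda>x. J_G C rho hL hS x) hF = K*(hh - hF)" unfolding dd K_def hh_eq by simp
    have pz: "p = 0 \<longleftrightarrow> hL = 1 / real C"
      unfolding p_def p0_def c_def[symmetric] using c2 by (simp add: field_simps)
    have Kpos: "hL \<noteq> 1/real C \<Longrightarrow> K > 0" unfolding K_def using pz nzp rho1 by simp
    have low: "hh < -1" if "0 < hL" "hL < hm"
    proof -
      define t where "t = hL/hm"
      have t: "0 < t" "t < 1" "hL = (1-t)*0 + t*hm" unfolding t_def using that hm0 by auto
      have "a*hL^2 - bM*hL + kM \<le> (1-t)*(a*0^2 - bM*0 + kM) + t*(a*hm^2 - bM*hm + kM)"
        using quad_conv[of a t 0 hm bM kM] a0 t by simp
      also have "\<dots> < 0" using rm kM0 t by (simp add: mult_pos_neg)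
      finally have "(c-1)^2*(q + rho*p) < 0" using qm_id[of hL] p_def q_def by simp
      then have "q + rho*p < 0" using cpos by (simp add: mult_less_0_iff)
      moreover have "hh*q = rho*p" using q0 hh_eq by simp
      ultimately have "(hh+1)*q < 0" by (simp add: algebra_simps)
      then show ?thesis using q0 by (simp add: mult_less_0_iff)
    qed
    have high: "hh > 1" if "hp < hL" "hL \<le> 1"
    proof -
      define t where "t = (hL - hp)/(1 - hp)"
      have h1: "1 - hp > 0" using hp1 by simp
      have t: "0 < t" "t \<le> 1" unfolding t_def using that h1 by (auto simp: field_simps)
      have "(1-t)*hp + t*1 = hp + t*(1-hp)" by (simp add: algebra_simps)
      also have "\<dots> = hL" unfolding t_def using h1 by simp
      finally have t3: "hL = (1-t)*hp + t*1" by simp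
      note t = t t3
      have "a*hL^2 - bP*hL + kP \<le> (1-t)*(a*hp^2 - bP*hp + kP) + t*(a*1^2 - bP*1 + kP)"
        using quad_conv[of a t hp 1 bP kP] a0 t by simp
      also have "\<dots> < 0" using rp qp1 t by (simp add: mult_pos_neg)
      finally have "(c-1)^2*(q - rho*p) < 0" using qp_id[of hL] p_def q_def by simp
      then have "q - rho*p < 0" using cpos by (simp add: mult_less_0_iff)
      moreover have "hh*q = rho*p" using q0 hh_eq by simp
      ultimately have "(hh-1)*q > 0" by (simp add: algebra_simps)
      then show ?thesis using q0 by (simp add: zero_less_mult_iff)
    qed
    have diff: "(\<lambda>x. J_G C rho hL hS x) differentiable (at hF)"
      using D real_differentiable_def by blast
    show "let J = (\<lambda>x. J_G C rho hL hS x);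
           d = deriv J hF;
           hm = hL_minus C rho hS; hp = hL_plus C rho hS;
           hh = hF_hat C rho hL hS
       in J differentiable (at hF) \<and>
          (hL = 1 / real C \<longrightarrow> d = 0) \<and>
          (hL \<noteq> 1 / real C \<longrightarrow>
             sgn d = sgn (hh - hF) \<and>
             ((0 < hL \<and> hL < hm) \<or> (hm < hL \<and> hL < hp \<and> hh < hF) \<longrightarrow> d < 0) \<and>
             ((hp < hL \<and> hL \<le> 1) \<or> (hm < hL \<and> hL < hp \<and> hF < hh) \<longrightarrow> d > 0) \<and>
             (hm < hL \<and> hL < hp \<and> hF = hh \<longrightarrow> d = 0))"
      unfolding Let_def hm_def[symmetric] hp_def[symmetric] hh_def[symmetric] dK
    proof (intro conjI impI diff)
      assume "hL = 1 / real C"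
      then show "K * (hh - hF) = 0" using pz K_def by simp
    next
      assume ne: "hL \<noteq> 1 / real C"
      have K: "K > 0" using Kpos ne by simp
      show "sgn (K * (hh - hF)) = sgn (hh - hF)" using K by (simp add: sgn_mult)
      show "K * (hh - hF) < 0" if "0 < hL \<and> hL < hm \<or> hm < hL \<and> hL < hp \<and> hh < hF"
        using that low K R by (auto intro!: mult_pos_neg)
      show "K * (hh - hF) > 0" if "hp < hL \<and> hL \<le> 1 \<or> hm < hL \<and> hL < hp \<and> hF < hh"
        using that high K R by (auto intro!: mult_pos_pos)
      show "K * (hh - hF) = 0" if "hm < hL \<and> hL < hp \<and> hF = hh" using that by simp
    qed
  qed
qed

end
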